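(* Let $r,q$ be positive integers, and let $k\ge 1$, $p_1,\dots,p_k\ge 1$ be integers with $\frac{r}{q}=\frac{k-1}{\sum_{i=1}^k p_i}$. Let $s_i$ ($1\le i\le k$), $a_{ij}$ ($1\le i\le k$, $1\le j\le p_i$) and $\nu$ be integers, with all $a_{ij}>0$. Then the identity $$\left\lceil \frac{rn}{q}\right\rceil=\sum_{i=1}^k \left\lceil \frac{r\left(n-s_i-\sum_{j=1}^{p_i}\left\lceil \frac{r(n-a_{ij})}{q}\right\rceil\right)}{q}\right\rceil+\nu$$ holds for all positive integers $n$ if and only if it holds for all integers $n$ with $0<n\le q^2$.
   Context: This identity expresses that the sequence $B(n)=\lceil rn/q\rceil$ (defined for all integers $n$) formally satisfies the nested recursion $R(n)=\sum_{i=1}^k R\big(n-s_i-\sum_{j=1}^{p_i}R(n-a_{ij})\big)+\nu$, i.e. substituting $B$ for $R$ on both sides gives an equality (no claim is made that the recursion generates $B$ from initial conditions). *)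

theory Defs
  imports Complex_Main
begin

definition cdiv :: "int \<Rightarrow> int \<Rightarrow> int \<Rightarrow> int" where
  "cdiv r q n = \<lceil>(of_int (r * n) :: rat) / of_int q\<rceil>"

definition rec_identity ::
  "int \<Rightarrow> int \<Rightarrow> nat \<Rightarrow> (nat \<Rightarrow> nat) \<Rightarrow> (nat \<Rightarrow> int) \<Rightarrow> (nat \<Rightarrow> nat \<Rightarrow> int) \<Rightarrow> int \<Rightarrow> int \<Rightarrow> bool" where
  "rec_identity r q k p s a \<nu> n \<longleftrightarrow>
     cdiv r q n = (\<Sum>i=1..k. cdiv r q (n - s i - (\<Sum>j=1..p i. cdiv r q (n - a i j)))) + \<nu>"

end

theory Submission
  imports Defs
begin

lemma cdiv_shift:
  assumes "q > 0"
  shows "cdiv r q (n + q * m) = cdiv r q n + r * m"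
proof -
  have "(of_int (r * (n + q * m)) :: rat) / of_int q = of_int (r*n) / of_int q + of_int (r*m)"
    using assms by (simp add: field_simps)
  then show ?thesis unfolding cdiv_def by (metis ceiling_add_of_int)
qed

theorem theorem1:
  fixes r q :: int and k :: nat and p :: "nat \<Rightarrow> nat"
    and s :: "nat \<Rightarrow> int" and a :: "nat \<Rightarrow> nat \<Rightarrow> int" and \<nu> :: int
  assumes "r > 0" and "q > 0" and "k \<ge> 1"
    and "\<forall>i\<in>{1..k}. p i \<ge> 1"
    and "(of_int r :: rat) / of_int q = (of_nat k - 1) / of_nat (\<Sum>i=1..k. p i)"
    and "\<forall>i\<in>{1..k}. \<forall>j\<in>{1..p i}. a i j > 0"
  shows "(\<forall>n::int. n > 0 \<longrightarrow> rec_identity r q k p s a \<nu> n) \<longleftrightarrow>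
         (\<forall>n::int. 0 < n \<and> n \<le> q^2 \<longrightarrow> rec_identity r q k p s a \<nu> n)"
proof -
  define P where "P = (\<Sum>i=1..k. p i)"
  have "(\<Sum>i=1..k. (1::nat)) \<le> P" unfolding P_def
    by (rule sum_mono) (use assms(4) in auto)
  hence Ppos: "P > 0" using assms(3) by simp
  have "(of_int r :: rat) * of_nat P = (of_nat k - 1) * of_int q"
    using assms(5) Ppos assms(2) unfolding P_def[symmetric] by (simp add: field_simps)
  hence "(of_int (r * int P) :: rat) = of_int ((int k - 1) * q)" by simp
  hence key: "r * int P = (int k - 1) * q" using of_int_eq_iff by blast
  have shift: "rec_identity r q k p s a \<nu> (n + q^2 * m) \<longleftrightarrow> rec_identity r q k p s a \<nu> n"
    for n m
  proof -
    define B where "B = cdiv r q"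
    define S where "S i = (\<Sum>j=1..p i. B (n - a i j))" for i
    have inner: "(\<Sum>j=1..p i. B (n + q^2*m - a i j)) = S i + int (p i) * (r*q*m)" for i
    proof -
      have "(\<Sum>j=1..p i. B (n + q^2*m - a i j)) = (\<Sum>j=1..p i. B (n - a i j) + r*(q*m))"
        apply (rule sum.cong[OF refl])
        using cdiv_shift[OF assms(2), of r "n - a _ _" "q*m"] unfolding B_def
        by (simp add: power2_eq_square algebra_simps)
      thus ?thesis by (simp add: S_def sum.distrib algebra_simps)
    qed
    have outer: "B (n + q^2*m - s i - (\<Sum>j=1..p i. B (n + q^2*m - a i j)))
        = B (n - s i - S i) + r * (q*m - int (p i)*r*m)" for i
    proof -
      have e: "n + q^2*m - s i - (\<Sum>j=1..p i. B (n + q^2*m - a i j))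
          = (n - s i - S i) + q * (q*m - int (p i)*r*m)"
        unfolding inner by (simp add: power2_eq_square algebra_simps)
      show ?thesis unfolding e unfolding B_def by (rule cdiv_shift[OF assms(2)])
    qed
    have "(\<Sum>i=1..k. B (n + q^2*m - s i - (\<Sum>j=1..p i. B (n + q^2*m - a i j))))
        = (\<Sum>i=1..k. B (n - s i - S i)) + (\<Sum>i=1..k. r * (q*m - int (p i)*r*m))"
      unfolding outer by (simp only: sum.distrib)
    also have "(\<Sum>i=1..k. r * (q*m - int (p i)*r*m)) = r*m*(int k * q - r * int P)"
      by (simp add: P_def sum_subtractf sum_distrib_left sum_distrib_right algebra_simps)
    also have "\<dots> = r*m*q"
    proof -
      have "int k * q - r * int P = q" using key by (simp add: algebra_simps)
      thus ?thesis by simp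
    qed
    finally have R: "(\<Sum>i=1..k. B (n + q^2*m - s i - (\<Sum>j=1..p i. B (n + q^2*m - a i j))))
        = (\<Sum>i=1..k. B (n - s i - S i)) + r*q*m" by (simp add: algebra_simps)
    have L: "B (n + q^2*m) = B n + r*q*m"
      using cdiv_shift[OF assms(2), of r n "q*m"] unfolding B_def
      by (simp add: power2_eq_square algebra_simps)
    show ?thesis unfolding rec_identity_def B_def[symmetric] S_def[symmetric]
      using R L by (simp add: S_def)
  qed
  show ?thesis
  proof
    assume "\<forall>n::int. n > 0 \<longrightarrow> rec_identity r q k p s a \<nu> n"
    thus "\<forall>n::int. 0 < n \<and> n \<le> q^2 \<longrightarrow> rec_identity r q k p s a \<nu> n" by simp
  next
    assume H: "\<forall>n::int. 0 < n \<and> n \<le> q^2 \<longrightarrow> rec_identity r q k p s a \<nu> n"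
    show "\<forall>n::int. n > 0 \<longrightarrow> rec_identity r q k p s a \<nu> n"
    proof (intro allI impI)
      fix n :: int assume "n > 0"
      define n0 where "n0 = (n - 1) mod q^2 + 1"
      define m where "m = (n - 1) div q^2"
      have qq: "q^2 > 0" using assms(2) by simp
      have "0 < n0 \<and> n0 \<le> q^2" unfolding n0_def using qq
        by (smt (verit) pos_mod_bound pos_mod_sign)
      hence "rec_identity r q k p s a \<nu> n0" using H by blast
      moreover have "n = n0 + q^2 * m" unfolding n0_def m_def
        by (smt (verit) mult.commute div_mult_mod_eq)
      ultimately show "rec_identity r q k p s a \<nu> n" using shift by simp
    qed
  qed
qed

end
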